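(* Suppose $q^{2k}\neq1$. Then there are algebra homomorphisms into $\mathrm{Cl}_q(n,k)$ defined on generators as follows. (1) For $\mathfrak{g}=\mathfrak{sl}_n$: $\Theta\colon U_q(\mathfrak{g},k)\to\mathrm{Cl}_q(n,k)$ with $E_i\mapsto\psi_i\psi_{i+1}^*$, $F_i\mapsto\psi_{i+1}\psi_i^*$, $K_i\mapsto\omega_i\omega_{i+1}^{-1}$ for $i=1,\dots,n-1$. (2) For $\mathfrak{g}=\mathfrak{so}_{2n}$: $\Theta\colon U_q(\mathfrak{g},k)\to\mathrm{Cl}_q(n,k)$ with $E_i\mapsto\psi_i\psi_{i+1}^*$, $F_i\mapsto\psi_{i+1}\psi_i^*$, $K_i\mapsto\omega_i\omega_{i+1}^{-1}$ for $i=1,\dots,n-1$, and $E_n\mapsto\psi_{n-1}\psi_n$, $F_n\mapsto\psi_n^*\psi_{n-1}^*$, $K_n\mapsto q\omega_{n-1}\omega_n$. (3) For $\mathfrak{g}=\mathfrak{so}_{2n+1}$, if $q^{1/2}\in\mathbb{k}$: an algebra homomorphism $U_{q^{1/2}}(\mathfrak{g},k)\to\mathrm{Cl}_q(n,k)$ with $E_i\mapsto\psi_i\psi_{i+1}^*$, $F_i\mapsto\psi_{i+1}\psi_i^*$, $K_i\mapsto\omega_i\omega_{i+1}^{-1}$ for $i=1,\dots,n-1$, and $E_n\mapsto\psi_n$, $F_n\mapsto\psi_n^*$, $K_n\mapsto q^{1/2}\omega_n$.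
   Context: Let $\mathbb{k}$ be a field of characteristic different from $2$, let $q\in\mathbb{k}^\times$, and let $n,k$ be positive integers. The quantum Clifford algebra $\mathrm{Cl}_q(n,k)$ is the unital associative $\mathbb{k}$-algebra generated by $\psi_a,\psi_a^*,\omega_a,\omega_a^{-1}$ for $a\in\{1,\dots,n\}$, subject to the relations (for all $a,b$): $\omega_a\omega_b=\omega_b\omega_a$; $\omega_a\omega_a^{-1}=1$; $\omega_a\psi_b=q^{\delta_{ab}}\psi_b\omega_a$; $\omega_a\psi_b^*=q^{-\delta_{ab}}\psi_b^*\omega_a$; $\psi_a\psi_b+\psi_b\psi_a=0$; $\psi_a^*\psi_b^*+\psi_b^*\psi_a^*=0$; $\psi_a\psi_a^*+q^k\psi_a^*\psi_a=\omega_a^{-k}$; $\psi_a\psi_a^*+q^{-k}\psi_a^*\psi_a=\omega_a^{k}$; $\psi_a\psi_b^*+\psi_b^*\psi_a=0$ if $a\neq b$. Twisted quantum group: let $\mathfrak{g}$ be a semisimple Lie algebra with simple roots $\alpha_1,\dots,\alpha_r$, Cartan matrix $A=(a_{ij})$ and positive coprime integers $d_i$ with $DA$ symmetric, $D=\mathrm{diag}(d_1,\dots,d_r)$. For a parameter $Q\in\mathbb{k}$ (taken transcendental, as is the standing convention in the paper's definition of $U_Q$), put $Q_i=Q^{d_i}$, $[m]_{x}=(x^m-x^{-m})/(x-x^{-1})$, $[m]_x!=[m]_x\cdots[1]_x$, and $q$-binomials $\begin{bmatrix} m\\ s\end{bmatrix}_x=[m]_x!/([s]_x![m-s]_x!)$.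 Then $U_Q(\mathfrak{g},k)$ is the unital associative $\mathbb{k}$-algebra generated by $E_i,F_i,K_i,K_i^{-1}$ ($i=1,\dots,r$) with relations $K_iK_j=K_jK_i$, $K_iK_i^{-1}=K_i^{-1}K_i=1$, $K_iE_jK_i^{-1}=Q_i^{a_{ij}}E_j$, $K_iF_jK_i^{-1}=Q_i^{-a_{ij}}F_j$, $E_iF_j-F_jE_i=\delta_{ij}\frac{K_i^k-K_i^{-k}}{Q_i^k-Q_i^{-k}}$, and for $i\neq j$ the Serre relations $\sum_{m=0}^{1-a_{ij}}(-1)^m\begin{bmatrix}1-a_{ij}\\ m\end{bmatrix}_{Q_i^k}X_i^mX_jX_i^{1-a_{ij}-m}=0$ for $X\in\{E,F\}$. Conventions (with $e_1,\dots,e_n$ orthonormal): for $\mathfrak{sl}_n$, $\alpha_i=e_i-e_{i+1}$ ($1\le i\le n-1$), all $d_i=1$; for $\mathfrak{so}_{2n}$, $\alpha_i=e_i-e_{i+1}$ ($i<n$), $\alpha_n=e_{n-1}+e_n$, all $d_i=1$; for $\mathfrak{so}_{2n+1}$, $\alpha_i=e_i-e_{i+1}$ ($i<n$), $\alpha_n=e_n$, with $d_i=2$ for $i<n$ and $d_n=1$; and $a_{ij}=2(\alpha_i,\alpha_j)/(\alpha_i,\alpha_i)$. In (1),(2) $Q=q$; in (3) $Q=q^{1/2}$. *)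

theory Defs
  imports Main
begin

text \<open>A unital associative algebra over the field 'k: a ring 'a together with a
  unital ring homomorphism from 'k into the centre of 'a (scalar embedding).\<close>
definition is_kalg :: "('k::field \<Rightarrow> 'a::ring_1) \<Rightarrow> bool" where
  "is_kalg emb \<longleftrightarrow> emb 1 = 1 \<and> (\<forall>x y. emb (x + y) = emb x + emb y)
     \<and> (\<forall>x y. emb (x * y) = emb x * emb y) \<and> (\<forall>x a. emb x * a = a * emb x)"

text \<open>Defining relations of the quantum Clifford algebra Cl_q(n,k), imposed on elements
  psi a, psis a (= psi_a^*), om a, omi a (= omega_a^{-1}), a = 1..n, of a 'k-algebra.\<close>
definition cl_rels :: "('k::field \<Rightarrow> 'a::ring_1) \<Rightarrow> 'k \<Rightarrow> nat \<Rightarrow> nat \<Rightarrow>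
    (nat \<Rightarrow> 'a) \<Rightarrow> (nat \<Rightarrow> 'a) \<Rightarrow> (nat \<Rightarrow> 'a) \<Rightarrow> (nat \<Rightarrow> 'a) \<Rightarrow> bool" where
  "cl_rels emb q n k psi psis om omi \<longleftrightarrow>
    (\<forall>a\<in>{1..n}. \<forall>b\<in>{1..n}.
       om a * om b = om b * om a
     \<and> om a * omi a = 1 \<and> omi a * om a = 1
     \<and> om a * psi b = emb (if a = b then q else 1) * psi b * om a
     \<and> om a * psis b = emb (if a = b then inverse q else 1) * psis b * om a
     \<and> psi a * psi b + psi b * psi a = 0
     \<and> psis a * psis b + psis b * psis a = 0
     \<and> psi a * psis a + emb (q ^ k) * psis a * psi a = omi a ^ k
     \<and> psi a * psis a + emb (inverse q ^ k) * psis a * psi a = om a ^ k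
     \<and> (a \<noteq> b \<longrightarrow> psi a * psis b + psis b * psi a = 0))"

text \<open>Symmetric Gaussian binomial coefficient [m choose s]_x, as the value at x of the
  Laurent polynomial (q-Pascal recursion; agrees with [m]!/([s]![m-s]!) whenever defined).\<close>
fun gbinom :: "'k::field \<Rightarrow> nat \<Rightarrow> nat \<Rightarrow> 'k" where
  "gbinom x 0 s = (if s = 0 then 1 else 0)"
| "gbinom x (Suc m) 0 = 1"
| "gbinom x (Suc m) (Suc s) =
     inverse x ^ Suc s * gbinom x m (Suc s) + x ^ (m - s) * gbinom x m s"

text \<open>Root data: roots as integer vectors indexed by 1..n (coordinates w.r.t. the
  orthonormal e_1..e_n), standard inner product, Cartan matrix a_ij = 2(a_i,a_j)/(a_i,a_i).\<close>
definition ip :: "nat \<Rightarrow> (nat \<Rightarrow> int) \<Rightarrow> (nat \<Rightarrow> int) \<Rightarrow> int" where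
  "ip n u v = (\<Sum>t=1..n. u t * v t)"

definition cartan :: "nat \<Rightarrow> (nat \<Rightarrow> nat \<Rightarrow> int) \<Rightarrow> nat \<Rightarrow> nat \<Rightarrow> int" where
  "cartan n rt i j = (2 * ip n (rt i) (rt j)) div ip n (rt i) (rt i)"

definition evec :: "nat \<Rightarrow> nat \<Rightarrow> int" where
  "evec i = (\<lambda>t. if t = i then 1 else 0)"

definition sl_root :: "nat \<Rightarrow> nat \<Rightarrow> int" where
  "sl_root i = (\<lambda>t. evec i t - evec (Suc i) t)"

definition so_even_root :: "nat \<Rightarrow> nat \<Rightarrow> nat \<Rightarrow> int" where
  "so_even_root n i = (if i < n then sl_root i else (\<lambda>t. evec (n - 1) t + evec n t))"

definition so_odd_root :: "nat \<Rightarrow> nat \<Rightarrow> nat \<Rightarrow> int" where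
  "so_odd_root n i = (if i < n then sl_root i else evec n)"

text \<open>Defining relations of U_Q(g,k) (rank r, Cartan matrix A, symmetrizers d),
  imposed on elements E i, F i, K i, Ki i (= K_i^{-1}), i = 1..r, of a 'k-algebra.\<close>
definition uq_rels :: "('k::field \<Rightarrow> 'a::ring_1) \<Rightarrow> 'k \<Rightarrow> nat \<Rightarrow> (nat \<Rightarrow> nat \<Rightarrow> int)
    \<Rightarrow> (nat \<Rightarrow> nat) \<Rightarrow> nat \<Rightarrow> (nat \<Rightarrow> 'a) \<Rightarrow> (nat \<Rightarrow> 'a) \<Rightarrow> (nat \<Rightarrow> 'a) \<Rightarrow> (nat \<Rightarrow> 'a) \<Rightarrow> bool" where
  "uq_rels emb Q r A d k E F K Ki \<longleftrightarrow>
    (\<forall>i\<in>{1..r}. \<forall>j\<in>{1..r}.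
       K i * K j = K j * K i
     \<and> K i * Ki i = 1 \<and> Ki i * K i = 1
     \<and> K i * E j * Ki i = emb (power_int (Q ^ d i) (A i j)) * E j
     \<and> K i * F j * Ki i = emb (power_int (Q ^ d i) (- A i j)) * F j
     \<and> E i * F j - F j * E i =
         (if i = j then emb (inverse ((Q ^ d i) ^ k - inverse ((Q ^ d i) ^ k)))
                          * (K i ^ k - Ki i ^ k) else 0)
     \<and> (i \<noteq> j \<longrightarrow>
          (\<Sum>m=0..nat (1 - A i j). emb ((-1) ^ m * gbinom ((Q ^ d i) ^ k) (nat (1 - A i j)) m)
              * E i ^ m * E j * E i ^ (nat (1 - A i j) - m)) = 0
        \<and> (\<Sum>m=0..nat (1 - A i j). emb ((-1) ^ m * gbinom ((Q ^ d i) ^ k) (nat (1 - A i j)) m)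
              * F i ^ m * F j * F i ^ (nat (1 - A i j) - m)) = 0))"

end

theory Submission
  imports Defs
begin
definition ac :: "'a::ring_1 \<Rightarrow> 'a \<Rightarrow> bool" where "ac x y \<longleftrightarrow> x*y + y*x = 0"
definition cm :: "'a::ring_1 \<Rightarrow> 'a \<Rightarrow> bool" where "cm x y \<longleftrightarrow> x*y = y*x"

lemma ac_eq: "ac x y \<Longrightarrow> y*x = -(x*y)"
  unfolding ac_def by (simp add: eq_neg_iff_add_eq_0 add.commute)
lemma ac_eq2: "ac x y \<Longrightarrow> x*y = -(y*x)"
  unfolding ac_def by (simp add: eq_neg_iff_add_eq_0)
lemma ac_sym: "ac x y \<Longrightarrow> ac y x" unfolding ac_def by (simp add: add.commute)
lemma cm_sym: "cm x y \<Longrightarrow> cm y x" unfolding cm_def by simp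

lemma cm_rr: "cm x y \<Longrightarrow> cm x z \<Longrightarrow> cm x (y*z)"
  unfolding cm_def by (metis mult.assoc)
lemma cm_ra: "ac x y \<Longrightarrow> ac x z \<Longrightarrow> cm x (y*z)"
proof -
  assume a: "ac x y" "ac x z"
  have "x*(y*z) = (x*y)*z" by (simp add: mult.assoc)
  also have "\<dots> = -(y*(x*z))" using ac_eq2[OF a(1)] by (simp add: mult.assoc)
  also have "\<dots> = y*z*x" using ac_eq2[OF a(2)] by (simp add: mult.assoc)
  finally show ?thesis unfolding cm_def .
qed
lemma ac_rr: "ac x y \<Longrightarrow> cm x z \<Longrightarrow> ac x (y*z)"
proof -
  assume a: "ac x y" "cm x z"
  have "x*(y*z) = (x*y)*z" by (simp add: mult.assoc)
  also have "\<dots> = -(y*(x*z))" using ac_eq2[OF a(1)] by (simp add: mult.assoc)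
  also have "\<dots> = -(y*z*x)" using a(2) unfolding cm_def by (simp add: mult.assoc)
  finally show ?thesis unfolding ac_def by simp
qed
lemma ac_ra: "cm x y \<Longrightarrow> ac x z \<Longrightarrow> ac x (y*z)"
proof -
  assume a: "cm x y" "ac x z"
  have "x*(y*z) = (x*y)*z" by (simp add: mult.assoc)
  also have "\<dots> = (y*(x*z))" using a(1) unfolding cm_def by (simp add: mult.assoc)
  also have "\<dots> = -(y*z*x)" using ac_eq2[OF a(2)] by (simp add: mult.assoc)
  finally show ?thesis unfolding ac_def by simp
qed
lemma cm_ll: "cm x z \<Longrightarrow> cm y z \<Longrightarrow> cm (x*y) z"
  by (meson cm_rr cm_sym)
lemma cm_la: "ac x z \<Longrightarrow> ac y z \<Longrightarrow> cm (x*y) z"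
  by (meson cm_ra cm_sym ac_sym)
lemma ac_ll: "ac x z \<Longrightarrow> cm y z \<Longrightarrow> ac (x*y) z"
  by (meson ac_rr cm_sym ac_sym)
lemma ac_la: "cm x z \<Longrightarrow> ac y z \<Longrightarrow> ac (x*y) z"
  by (meson ac_ra cm_sym ac_sym)

lemma cm_one: "cm x 1" "cm 1 x" unfolding cm_def by simp_all

lemma zero_mid: "x*x = 0 \<Longrightarrow> ac x w \<or> cm x w \<Longrightarrow> x*w*x = 0"
proof -
  assume h: "x*x = 0" "ac x w \<or> cm x w"
  from h(2) show ?thesis
  proof
    assume "ac x w" then have "x*w = -(w*x)" by (rule ac_eq2)
    then have "x*w*x = -(w*(x*x))" by (simp add: mult.assoc)
    then show ?thesis using h(1) by simp
  next
    assume "cm x w" then have "x*w = w*x" unfolding cm_def .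
    then have "x*w*x = w*(x*x)" by (simp add: mult.assoc)
    then show ?thesis using h(1) by simp
  qed
qed

lemma z_first: "a*a = 0 \<Longrightarrow> ac a (b*y) \<or> cm a (b*y) \<Longrightarrow> (a*b)*y*(a*d) = 0"
proof -
  assume "a*a = 0" "ac a (b*y) \<or> cm a (b*y)"
  then have "a*(b*y)*a = 0" by (rule zero_mid)
  then have "a*(b*y)*a*d = 0" by simp
  then show ?thesis by (simp add: mult.assoc)
qed
lemma z_second: "b*b = 0 \<Longrightarrow> ac b (y*c) \<or> cm b (y*c) \<Longrightarrow> (a*b)*y*(c*b) = 0"
proof -
  assume "b*b = 0" "ac b (y*c) \<or> cm b (y*c)"
  then have "b*(y*c)*b = 0" by (rule zero_mid)
  then have "a*(b*(y*c)*b) = 0" by simp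
  then show ?thesis by (simp add: mult.assoc)
qed

lemma cm_power: "cm x y \<Longrightarrow> cm (x^m) y"
  by (induction m) (auto simp: cm_one intro: cm_ll)
lemma power_cm_distrib: "cm x y \<Longrightarrow> (x*y)^m = x^m * y^m"
proof (induction m)
  case 0 then show ?case by simp
next
  case (Suc m)
  have c: "y * x^m = x^m * y" using cm_power[OF Suc.prems, of m] unfolding cm_def by simp
  have "(x*y)^Suc m = x*y*(x^m*y^m)" using Suc by simp
  also have "\<dots> = x*(y*x^m)*y^m" by (simp add: mult.assoc)
  also have "\<dots> = x^Suc m * y^Suc m" using c by (simp add: mult.assoc)
  finally show ?case .
qed

locale clq =
  fixes emb :: "'k::field \<Rightarrow> 'a::ring_1" and q :: 'k and n k :: nat
    and psi psis om omi :: "nat \<Rightarrow> 'a"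
  assumes char: "(2::'k) \<noteq> 0" and q_nz: "q \<noteq> 0" and n_pos: "0 < n" and k_pos: "0 < k"
    and q2k: "q ^ (2 * k) \<noteq> 1" and alg: "is_kalg emb"
    and cl: "cl_rels emb q n k psi psis om omi"
begin

lemma emb1: "emb 1 = 1" using alg unfolding is_kalg_def by blast
lemma emb_add: "emb (x + y) = emb x + emb y" using alg unfolding is_kalg_def by blast
lemma emb_mult: "emb (x * y) = emb x * emb y" using alg unfolding is_kalg_def by blast
lemma emb_comm: "emb x * a = a * emb x" using alg unfolding is_kalg_def by blast
lemma emb0: "emb 0 = 0" using emb_add[of 0 0] by simp
lemma emb_uminus: "emb (- x) = - emb x"
  using emb_add[of x "-x"] emb0 by (simp add: eq_neg_iff_add_eq_0 add.commute)
lemma emb_diff: "emb (x - y) = emb x - emb y"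
  using emb_add[of x "-y"] emb_uminus by simp
lemma emb_power: "emb (x ^ m) = emb x ^ m"
  by (induction m) (simp_all add: emb1 emb_mult)
lemma emb_inv: "x \<noteq> 0 \<Longrightarrow> emb x * emb (inverse x) = 1"
  by (simp flip: emb_mult add: emb1)
lemma emb_inv': "x \<noteq> 0 \<Longrightarrow> emb (inverse x) * emb x = 1"
  by (simp flip: emb_mult add: emb1)
lemma cm_emb: "cm (emb x) a" "cm a (emb x)" unfolding cm_def using emb_comm by auto
lemma emb_left: "a * (emb x * b) = emb x * (a * b)"
  by (metis emb_comm mult.assoc)
lemma emb_two: "emb 2 = 2"
  using emb_add[of 1 1] emb1 by (simp add: one_add_one)

lemma clD:
  assumes "a \<in> {1..n}" "b \<in> {1..n}"
  shows "om a * om b = om b * om a"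
     "om a * omi a = 1" "omi a * om a = 1"
     "om a * psi b = emb (if a = b then q else 1) * psi b * om a"
     "om a * psis b = emb (if a = b then inverse q else 1) * psis b * om a"
     "psi a * psi b + psi b * psi a = 0"
     "psis a * psis b + psis b * psis a = 0"
     "psi a * psis a + emb (q ^ k) * psis a * psi a = omi a ^ k"
     "psi a * psis a + emb (inverse q ^ k) * psis a * psi a = om a ^ k"
     "a \<noteq> b \<Longrightarrow> psi a * psis b + psis b * psi a = 0"
  using cl assms unfolding cl_rels_def by blast+

lemma sq_zero: assumes "x * x + x * x = (0::'a)" shows "x * x = 0"
proof -
  have "emb 2 * (x*x) = 0" using assms by (simp add: emb_two mult_2)
  then have "emb (inverse 2) * (emb 2 * (x*x)) = 0" by simp
  then show ?thesis using emb_inv'[OF char] by (simp flip: mult.assoc)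
qed

lemma psi_sq: "a \<in> {1..n} \<Longrightarrow> psi a * psi a = 0"
  using clD(6)[of a a] sq_zero by blast
lemma psis_sq: "a \<in> {1..n} \<Longrightarrow> psis a * psis a = 0"
  using clD(7)[of a a] sq_zero by blast

lemma ac_pp: "a \<in> {1..n} \<Longrightarrow> b \<in> {1..n} \<Longrightarrow> ac (psi a) (psi b)"
  using clD(6) unfolding ac_def by blast
lemma ac_ss: "a \<in> {1..n} \<Longrightarrow> b \<in> {1..n} \<Longrightarrow> ac (psis a) (psis b)"
  using clD(7) unfolding ac_def by blast
lemma ac_ps: "a \<in> {1..n} \<Longrightarrow> b \<in> {1..n} \<Longrightarrow> a \<noteq> b \<Longrightarrow> ac (psi a) (psis b)"
  using clD(10) unfolding ac_def by blast
lemma ac_sp: "a \<in> {1..n} \<Longrightarrow> b \<in> {1..n} \<Longrightarrow> a \<noteq> b \<Longrightarrow> ac (psis a) (psi b)"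
  using ac_ps ac_sym by blast

lemmas gen_ac = ac_pp ac_ss ac_ps ac_sp

lemma omi_om_comm: "a \<in> {1..n} \<Longrightarrow> b \<in> {1..n} \<Longrightarrow> omi a * om b = om b * omi a"
proof -
  assume ab: "a \<in> {1..n}" "b \<in> {1..n}"
  have "omi a * om b = omi a * om b * (om a * omi a)" using clD(2)[OF ab(1) ab(1)] by simp
  also have "\<dots> = omi a * (om b * om a) * omi a" by (simp add: mult.assoc)
  also have "\<dots> = omi a * (om a * om b) * omi a" using clD(1)[OF ab] by simp
  also have "\<dots> = (omi a * om a) * om b * omi a" by (simp add: mult.assoc)
  also have "\<dots> = om b * omi a" using clD(3)[OF ab(1) ab(1)] by simp
  finally show ?thesis .
qed

lemma omi_omi_comm: "a \<in> {1..n} \<Longrightarrow> b \<in> {1..n} \<Longrightarrow> omi a * omi b = omi b * omi a"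
proof -
  assume ab: "a \<in> {1..n}" "b \<in> {1..n}"
  have "omi a * omi b = omi a * omi b * (om a * omi a)" using clD(2)[OF ab(1) ab(1)] by simp
  also have "\<dots> = omi a * (omi b * om a) * omi a" by (simp add: mult.assoc)
  also have "\<dots> = omi a * (om a * omi b) * omi a" using omi_om_comm[OF ab(2) ab(1)] by simp
  also have "\<dots> = (omi a * om a) * omi b * omi a" by (simp add: mult.assoc)
  also have "\<dots> = omi b * omi a" using clD(3)[OF ab(1) ab(1)] by simp
  finally show ?thesis .
qed

lemma cm_oo: "a \<in> {1..n} \<Longrightarrow> b \<in> {1..n} \<Longrightarrow> cm (om a) (om b)"
  "a \<in> {1..n} \<Longrightarrow> b \<in> {1..n} \<Longrightarrow> cm (omi a) (om b)"
  "a \<in> {1..n} \<Longrightarrow> b \<in> {1..n} \<Longrightarrow> cm (om a) (omi b)"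
  "a \<in> {1..n} \<Longrightarrow> b \<in> {1..n} \<Longrightarrow> cm (omi a) (omi b)"
  unfolding cm_def using clD(1) omi_om_comm omi_omi_comm by metis+

end

lemma ip_evec: "a \<in> {1..n} \<Longrightarrow> ip n (evec a) v = v a"
proof -
  assume a: "a \<in> {1..n}"
  have "ip n (evec a) v = (\<Sum>t=1..n. if t = a then v t else 0)"
    unfolding ip_def evec_def by (rule sum.cong) auto
  also have "\<dots> = v a" using a by (simp add: sum.delta)
  finally show ?thesis .
qed

lemma ip_add: "ip n (\<lambda>t. f t + g t) v = ip n f v + ip n g v"
  unfolding ip_def by (simp add: distrib_right sum.distrib)
lemma ip_diff: "ip n (\<lambda>t. f t - g t) v = ip n f v - ip n g v"
  unfolding ip_def by (simp add: left_diff_distrib sum_subtractf)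

lemma ip_sl: "1 \<le> i \<Longrightarrow> i < n \<Longrightarrow> ip n (sl_root i) v = v i - v (Suc i)"
  unfolding sl_root_def by (simp add: ip_diff ip_evec)

lemma ip_top: "2 \<le> n \<Longrightarrow> ip n (\<lambda>t. evec (n - 1) t + evec n t) v = v (n - 1) + v n"
  by (simp add: ip_add ip_evec)

lemma ip_sl_self: "1 \<le> i \<Longrightarrow> i < n \<Longrightarrow> ip n (sl_root i) (sl_root i) = 2"
  by (simp only: ip_sl) (simp add: sl_root_def evec_def)

lemma cartan_sl: "1 \<le> i \<Longrightarrow> i < n \<Longrightarrow> cartan n sl_root i j = sl_root j i - sl_root j (Suc i)"
  unfolding cartan_def by (simp only: ip_sl_self, simp only: ip_sl) simp

lemma cartan_even_lt: "1 \<le> i \<Longrightarrow> i < n \<Longrightarrow>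
   cartan n (so_even_root n) i j = so_even_root n j i - so_even_root n j (Suc i)"
proof -
  assume "1 \<le> i" "i < n"
  then have "so_even_root n i = sl_root i" by (simp add: so_even_root_def)
  then show ?thesis unfolding cartan_def using \<open>1 \<le> i\<close> \<open>i < n\<close> by (simp only: ip_sl_self, simp only: ip_sl) simp
qed

lemma cartan_even_n: "2 \<le> n \<Longrightarrow>
   cartan n (so_even_root n) n j = so_even_root n j (n - 1) + so_even_root n j n"
proof -
  assume n: "2 \<le> n"
  have r: "so_even_root n n = (\<lambda>t. evec (n - 1) t + evec n t)" by (simp add: so_even_root_def)
  have "ip n (\<lambda>t. evec (n - 1) t + evec n t) (\<lambda>t. evec (n - 1) t + evec n t) = 2"
    using n by (simp only: ip_top) (simp add: evec_def)
  then show ?thesis unfolding cartan_def r using n by (simp only: ip_top) simp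
qed

lemma cartan_odd_lt: "1 \<le> i \<Longrightarrow> i < n \<Longrightarrow>
   cartan n (so_odd_root n) i j = so_odd_root n j i - so_odd_root n j (Suc i)"
proof -
  assume "1 \<le> i" "i < n"
  then have "so_odd_root n i = sl_root i" by (simp add: so_odd_root_def)
  then show ?thesis unfolding cartan_def using \<open>1 \<le> i\<close> \<open>i < n\<close> by (simp only: ip_sl_self, simp only: ip_sl) simp
qed

lemma cartan_odd_n: "1 \<le> n \<Longrightarrow>
   cartan n (so_odd_root n) n j = 2 * so_odd_root n j n"
proof -
  assume n: "1 \<le> n"
  have r: "so_odd_root n n = evec n" by (simp add: so_odd_root_def)
  have "ip n (evec n) (evec n) = evec n n" using n by (simp add: ip_evec)
  then have "ip n (evec n) (evec n) = 1" by (simp add: evec_def)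
  then show ?thesis unfolding cartan_def r using n by (simp add: ip_evec)
qed

context clq begin

definition hw :: "'a \<Rightarrow> (nat \<Rightarrow> int) \<Rightarrow> bool" where
  "hw X v \<longleftrightarrow> (\<forall>a\<in>{1..n}. om a * X = emb (power_int q (v a)) * X * om a)"

lemma hw_psi: "b \<in> {1..n} \<Longrightarrow> hw (psi b) (evec b)"
  unfolding hw_def evec_def using clD(4) by (auto split: if_splits)
lemma hw_psis: "b \<in> {1..n} \<Longrightarrow> hw (psis b) (\<lambda>t. - evec b t)"
  unfolding hw_def evec_def using clD(5) by (auto split: if_splits simp: power_int_minus)

lemma hw_mult: "hw X v \<Longrightarrow> hw Y u \<Longrightarrow> hw (X * Y) (\<lambda>t. v t + u t)"
  unfolding hw_def
proof (intro ballI)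
  fix a assume h: "\<forall>a\<in>{1..n}. om a * X = emb (power_int q (v a)) * X * om a"
     "\<forall>a\<in>{1..n}. om a * Y = emb (power_int q (u a)) * Y * om a" and a: "a \<in> {1..n}"
  have "om a * (X * Y) = (om a * X) * Y" by (simp add: mult.assoc)
  also have "\<dots> = emb (power_int q (v a)) * X * (om a * Y)" using h(1) a by (simp add: mult.assoc)
  also have "\<dots> = emb (power_int q (v a)) * X * (emb (power_int q (u a)) * Y * om a)" using h(2) a by simp
  also have "\<dots> = emb (power_int q (v a) * power_int q (u a)) * (X * Y) * om a"
    by (simp add: emb_mult mult.assoc emb_left[of X])
  also have "\<dots> = emb (power_int q (v a + u a)) * (X * Y) * om a"
    using q_nz by (simp add: power_int_add)
  finally show "om a * (X * Y) = emb (power_int q (v a + u a)) * (X * Y) * om a" .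
qed

lemma hw_cong: "hw X v \<Longrightarrow> (\<And>t. v t = u t) \<Longrightarrow> hw X u"
  unfolding hw_def by simp

lemma conj1: assumes "hw X v" "a \<in> {1..n}"
  shows "om a * X * omi a = emb (power_int q (v a)) * X"
proof -
  have "om a * X * omi a = emb (power_int q (v a)) * X * (om a * omi a)"
    using assms unfolding hw_def by (simp add: mult.assoc)
  then show ?thesis using clD(2)[OF assms(2) assms(2)] by simp
qed

lemma conj2: assumes "hw X v" "a \<in> {1..n}"
  shows "omi a * X * om a = emb (power_int q (- v a)) * X"
proof -
  let ?c = "power_int q (v a)"
  have c0: "?c \<noteq> 0" using q_nz by simp
  have e: "om a * X = emb ?c * X * om a" using assms unfolding hw_def by blast
  have "omi a * (om a * X) * omi a * om a = (omi a * om a) * X * (omi a * om a)"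
    by (simp add: mult.assoc)
  then have "X = omi a * (om a * X) * omi a * om a"
    using clD(3)[OF assms(2) assms(2)] by simp
  also have "\<dots> = emb ?c * (omi a * X * om a)"
    using e clD(2)[OF assms(2) assms(2)] by (simp add: mult.assoc emb_left[of "omi a"])
  finally have "emb (inverse ?c) * X = emb (inverse ?c) * emb ?c * (omi a * X * om a)"
    by (simp add: mult.assoc)
  then show ?thesis using emb_inv'[OF c0] by (simp add: power_int_minus)
qed

lemma conjK: assumes "hw X v" "a \<in> {1..n}" "b \<in> {1..n}"
  shows "om a * omi b * X * (omi a * om b) = emb (power_int q (v a - v b)) * X"
proof -
  have "om a * omi b * X * (omi a * om b) = om a * (omi b * X * om b) * omi a"
    using omi_om_comm[OF assms(2,3)] by (simp add: mult.assoc)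
  also have "\<dots> = emb (power_int q (- v b)) * (om a * X * omi a)"
    using conj2[OF assms(1,3)] by (simp add: mult.assoc emb_left[of "om a"])
  also have "\<dots> = emb (power_int q (- v b) * power_int q (v a)) * X"
    using conj1[OF assms(1,2)] by (simp add: mult.assoc emb_mult)
  also have "\<dots> = emb (power_int q (v a - v b)) * X"
    using q_nz by (subst diff_conv_add_uminus, subst add.commute, subst power_int_add) simp_all
  finally show ?thesis .
qed

lemma conjKp: assumes "hw X v" "a \<in> {1..n}" "b \<in> {1..n}"
  shows "om a * om b * X * (omi a * omi b) = emb (power_int q (v a + v b)) * X"
proof -
  have "om a * om b * X * (omi a * omi b) = om a * (om b * X * omi b) * omi a"
    using omi_omi_comm[OF assms(2,3)] by (simp add: mult.assoc)
  also have "\<dots> = emb (power_int q (v b)) * (om a * X * omi a)"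
    using conj1[OF assms(1,3)] by (simp add: mult.assoc emb_left[of "om a"])
  also have "\<dots> = emb (power_int q (v b) * power_int q (v a)) * X"
    using conj1[OF assms(1,2)] by (simp add: mult.assoc emb_mult)
  also have "\<dots> = emb (power_int q (v a + v b)) * X"
    using q_nz by (subst add.commute, subst power_int_add) simp_all
  finally show ?thesis .
qed

end

context clq begin

lemma emb_mult2: "emb x * (emb y * Z) = emb (x * y) * Z"
  by (simp add: emb_mult mult.assoc)

lemma inv3: "(t::'k) \<noteq> 0 \<Longrightarrow> t * (inverse t * inverse t) = inverse t"
  by (simp add: mult.assoc[symmetric])

lemma L_sl: "(M1 + emb a * N1) * (M2 + emb b * N2) - (M1 + emb b * N1) * (M2 + emb a * N2)
   = emb (b - a) * (M1 * N2 - N1 * M2)"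
  by (simp add: algebra_simps emb_left[of M1] emb_left[of N1] emb_diff emb_mult2 emb1 flip: emb_mult)

lemma L_even: assumes "t \<noteq> 0"
  shows "emb t * ((M1 + emb (inverse t) * N1) * (M2 + emb (inverse t) * N2))
       - emb (inverse t) * ((M1 + emb t * N1) * (M2 + emb t * N2))
   = emb (t - inverse t) * (M1 * M2 - N1 * N2)"
  using assms by (simp add: inv3[OF assms] algebra_simps emb_left[of M1] emb_left[of N1] emb_diff emb_mult2 emb1 flip: emb_mult)

lemma L_odd: assumes "u \<noteq> 0"
  shows "emb u * (M + emb (inverse (u^2)) * N) - emb (inverse u) * (M + emb (u^2) * N)
   = emb (u - inverse u) * (M - N)"
  using assms by (simp add: inv3[OF assms] algebra_simps emb_diff power2_eq_square emb_mult2 emb1 flip: emb_mult)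

end

context clq begin

lemmas cmr = cm_rr cm_ra ac_rr ac_ra cm_ll cm_la ac_ll ac_la

lemma tq_nz: "q ^ k - inverse (q ^ k) \<noteq> 0"
proof
  assume h: "q ^ k - inverse (q ^ k) = 0"
  have "q ^ k \<noteq> 0" using q_nz by simp
  then have "q ^ k * q ^ k = 1" using h q_nz by (simp add: field_simps)
  then show False using q2k by (simp add: power_mult power2_eq_square mult.commute[of 2 k] flip: power_add)
qed

lemma om_k: "a \<in> {1..n} \<Longrightarrow> om a ^ k = psi a * psis a + emb (inverse (q ^ k)) * (psis a * psi a)"
  using clD(9)[of a a] by (simp add: power_inverse mult.assoc)
lemma omi_k: "a \<in> {1..n} \<Longrightarrow> omi a ^ k = psi a * psis a + emb (q ^ k) * (psis a * psi a)"
  using clD(8)[of a a] by (simp add: mult.assoc)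

lemma diag_pair:
  assumes a: "a \<in> {1..n}" and b: "b \<in> {1..n}" and ab: "a \<noteq> b"
  shows "(psi a * psis b) * (psi b * psis a) - (psi b * psis a) * (psi a * psis b)
     = emb (inverse (q ^ k - inverse (q ^ k))) * ((om a * omi b) ^ k - (omi a * om b) ^ k)"
proof -
  have ba: "b \<noteq> a" using ab by simp
  note g = gen_ac[OF a a] gen_ac[OF a b] gen_ac[OF b a] gen_ac[OF b b]
  have c1: "cm (psi a) (psis b * psi b)" by (simp add: cmr g ab ba)
  have c2: "cm (psi b) (psis a * psi a)" by (simp add: cmr g ab ba)
  have c3: "cm (psi a * psis a) (psis b * psi b)" by (simp add: cmr g ab ba)
  have "(psi a * psis b) * (psi b * psis a) = (psi a * (psis b * psi b)) * psis a"
    by (simp add: mult.assoc)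
  also have "\<dots> = (psis b * psi b) * (psi a * psis a)" using c1 unfolding cm_def by (simp add: mult.assoc)
  also have "\<dots> = (psi a * psis a) * (psis b * psi b)" using c3 unfolding cm_def by simp
  finally have e1: "(psi a * psis b) * (psi b * psis a) = (psi a * psis a) * (psis b * psi b)" .
  have "(psi b * psis a) * (psi a * psis b) = (psi b * (psis a * psi a)) * psis b"
    by (simp add: mult.assoc)
  also have "\<dots> = (psis a * psi a) * (psi b * psis b)" using c2 unfolding cm_def by (simp add: mult.assoc)
  finally have e2: "(psi b * psis a) * (psi a * psis b) = (psis a * psi a) * (psi b * psis b)" .
  have k1: "(om a * omi b) ^ k = om a ^ k * omi b ^ k"
    by (rule power_cm_distrib) (rule cm_oo[OF a b])
  have k2: "(omi a * om b) ^ k = omi a ^ k * om b ^ k"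
    by (rule power_cm_distrib) (rule cm_oo[OF a b])
  have "(om a * omi b) ^ k - (omi a * om b) ^ k
      = emb (q ^ k - inverse (q ^ k)) * ((psi a * psis a) * (psis b * psi b) - (psis a * psi a) * (psi b * psis b))"
    unfolding k1 k2 om_k[OF a] om_k[OF b] omi_k[OF a] omi_k[OF b] by (rule L_sl)
  then have "emb (inverse (q ^ k - inverse (q ^ k))) * ((om a * omi b) ^ k - (omi a * om b) ^ k)
      = (emb (inverse (q ^ k - inverse (q ^ k))) * emb (q ^ k - inverse (q ^ k))) * ((psi a * psis a) * (psis b * psi b) - (psis a * psi a) * (psi b * psis b))"
    by (simp add: mult.assoc)
  also have "\<dots> = (psi a * psis a) * (psis b * psi b) - (psis a * psi a) * (psi b * psis b)"
    using emb_inv'[OF tq_nz] by simp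
  finally show ?thesis using e1 e2 by simp
qed

lemma diag_even:
  assumes a: "a \<in> {1..n}" and b: "b \<in> {1..n}" and ab: "a \<noteq> b"
  shows "(psi a * psi b) * (psis b * psis a) - (psis b * psis a) * (psi a * psi b)
     = emb (inverse (q ^ k - inverse (q ^ k))) * ((emb q * om a * om b) ^ k - (emb (inverse q) * omi a * omi b) ^ k)"
proof -
  have ba: "b \<noteq> a" using ab by simp
  note g = gen_ac[OF a a] gen_ac[OF a b] gen_ac[OF b a] gen_ac[OF b b]
  have c1: "cm (psi a) (psi b * psis b)" by (simp add: cmr g ab ba)
  have c2: "cm (psis b) (psis a * psi a)" by (simp add: cmr g ab ba)
  have c3: "cm (psi b * psis b) (psi a * psis a)" by (simp add: cmr g ab ba)
  have "(psi a * psi b) * (psis b * psis a) = (psi a * (psi b * psis b)) * psis a"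
    by (simp add: mult.assoc)
  also have "\<dots> = (psi b * psis b) * (psi a * psis a)" using c1 unfolding cm_def by (simp add: mult.assoc)
  also have "\<dots> = (psi a * psis a) * (psi b * psis b)" using c3 unfolding cm_def by simp
  finally have e1: "(psi a * psi b) * (psis b * psis a) = (psi a * psis a) * (psi b * psis b)" .
  have "(psis b * psis a) * (psi a * psi b) = (psis b * (psis a * psi a)) * psi b"
    by (simp add: mult.assoc)
  also have "\<dots> = (psis a * psi a) * (psis b * psi b)" using c2 unfolding cm_def by (simp add: mult.assoc)
  finally have e2: "(psis b * psis a) * (psi a * psi b) = (psis a * psi a) * (psis b * psi b)" .
  have k1: "(emb q * om a * om b) ^ k = emb (q ^ k) * (om a ^ k * om b ^ k)"
  proof -
    have "(emb q * om a * om b) ^ k = (emb q * om a) ^ k * om b ^ k"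
      by (rule power_cm_distrib) (simp add: cmr cm_emb cm_oo[OF a b])
    also have "\<dots> = emb q ^ k * om a ^ k * om b ^ k"
      by (subst power_cm_distrib) (simp_all add: cm_emb)
    finally show ?thesis by (simp add: emb_power mult.assoc)
  qed
  have k2: "(emb (inverse q) * omi a * omi b) ^ k = emb (inverse (q ^ k)) * (omi a ^ k * omi b ^ k)"
  proof -
    have "(emb (inverse q) * omi a * omi b) ^ k = (emb (inverse q) * omi a) ^ k * omi b ^ k"
      by (rule power_cm_distrib) (simp add: cmr cm_emb cm_oo[OF a b])
    also have "\<dots> = emb (inverse q) ^ k * omi a ^ k * omi b ^ k"
      by (subst power_cm_distrib) (simp_all add: cm_emb)
    finally show ?thesis by (simp add: mult.assoc power_inverse flip: emb_power)
  qed
  have t0: "q ^ k \<noteq> 0" using q_nz by simp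
  have "(emb q * om a * om b) ^ k - (emb (inverse q) * omi a * omi b) ^ k
      = emb (q ^ k - inverse (q ^ k)) * ((psi a * psis a) * (psi b * psis b) - (psis a * psi a) * (psis b * psi b))"
    unfolding k1 k2 om_k[OF a] om_k[OF b] omi_k[OF a] omi_k[OF b] by (rule L_even[OF t0])
  then have "emb (inverse (q ^ k - inverse (q ^ k))) * ((emb q * om a * om b) ^ k - (emb (inverse q) * omi a * omi b) ^ k)
      = (emb (inverse (q ^ k - inverse (q ^ k))) * emb (q ^ k - inverse (q ^ k))) * ((psi a * psis a) * (psi b * psis b) - (psis a * psi a) * (psis b * psi b))"
    by (simp add: mult.assoc)
  also have "\<dots> = (psi a * psis a) * (psi b * psis b) - (psis a * psi a) * (psis b * psi b)"
    using emb_inv'[OF tq_nz] by simp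
  finally show ?thesis using e1 e2 by simp
qed

lemma diag_odd:
  assumes a: "a \<in> {1..n}" and s: "s ^ 2 = q"
  shows "psi a * psis a - psis a * psi a
     = emb (inverse (s ^ k - inverse (s ^ k))) * ((emb s * om a) ^ k - (emb (inverse s) * omi a) ^ k)"
proof -
  have s0: "s ^ k \<noteq> 0" using s q_nz by auto
  have qk: "q ^ k = (s ^ k) ^ 2"
  proof -
    have "q ^ k = (s ^ 2) ^ k" using s by simp
    also have "\<dots> = (s ^ k) ^ 2" by (metis power_mult mult.commute)
    finally show ?thesis .
  qed
  have u1: "s ^ k - inverse (s ^ k) \<noteq> 0"
  proof
    assume h: "s ^ k - inverse (s ^ k) = 0"
    then have "s ^ k * s ^ k = 1" using s0 by (simp add: field_simps)
    then have "q ^ k = 1" using qk by (simp add: power2_eq_square)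
    then show False using q2k by (simp add: power_mult mult.commute[of 2 k])
  qed
  have k1: "(emb s * om a) ^ k = emb (s ^ k) * om a ^ k"
    by (subst power_cm_distrib) (simp_all add: cm_emb emb_power)
  have k2: "(emb (inverse s) * omi a) ^ k = emb (inverse (s ^ k)) * omi a ^ k"
    by (subst power_cm_distrib) (simp_all add: cm_emb power_inverse flip: emb_power)
  have "(emb s * om a) ^ k - (emb (inverse s) * omi a) ^ k
      = emb (s ^ k - inverse (s ^ k)) * (psi a * psis a - psis a * psi a)"
    unfolding k1 k2 om_k[OF a] omi_k[OF a] qk by (rule L_odd[OF s0])
  then have "emb (inverse (s ^ k - inverse (s ^ k))) * ((emb s * om a) ^ k - (emb (inverse s) * omi a) ^ k)
      = (emb (inverse (s ^ k - inverse (s ^ k))) * emb (s ^ k - inverse (s ^ k))) * (psi a * psis a - psis a * psi a)"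
    by (simp add: mult.assoc)
  also have "\<dots> = psi a * psis a - psis a * psi a"
    using emb_inv'[OF u1] by simp
  finally show ?thesis by simp
qed

end

lemma z13: "a*a = 0 \<Longrightarrow> ac a b \<Longrightarrow> (a*b)*(a*d) = (0::'a::ring_1)"
  using z_first[of a b 1 d] by (simp add: cm_one)
lemma z24: "b*b = 0 \<Longrightarrow> ac b c \<Longrightarrow> (a*b)*(c*b) = (0::'a::ring_1)"
  using z_second[of b 1 c a] by (simp add: cm_one)

lemma pow_zero: "X*X = (0::'a::ring_1) \<Longrightarrow> 2 \<le> m \<Longrightarrow> X^m = 0"
proof -
  assume "X*X = 0" "2 \<le> m"
  then obtain r where "m = Suc (Suc r)" by (metis add_2_eq_Suc le_Suc_ex)
  then show ?thesis using \<open>X*X = 0\<close> by (simp add: mult.assoc[symmetric])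
qed

context clq begin

lemma serre_ok:
  assumes "A = 0 \<and> X*Y = Y*X \<or> A = -1 \<and> X*X = 0 \<and> X*Y*X = 0 \<or> A = -2 \<and> X*X = 0"
  shows "(\<Sum>m=0..nat (1 - A). emb ((-1)^m * gbinom x (nat (1 - A)) m) * X^m * Y * X^(nat (1 - A) - m)) = 0"
proof -
  consider "A = 0" "X*Y = Y*X" | "A = -1" "X*X = 0" "X*Y*X = 0" | "A = -2" "X*X = 0" using assms by blast
  then show ?thesis
  proof cases
    case 1
    have g: "gbinom x 1 1 = 1" "gbinom x 1 0 = 1" by (simp_all add: One_nat_def)
    show ?thesis using 1 g by (simp add: emb1 emb_uminus)
  next
    case 2
    have "\<forall>m\<in>{0..2}. emb ((-1)^m * gbinom x 2 m) * X^m * Y * X^(2 - m) = 0"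
    proof
      fix m :: nat assume "m \<in> {0..2}"
      then have "m = 0 \<or> m = 1 \<or> m = 2" by auto
      then show "emb ((-1)^m * gbinom x 2 m) * X^m * Y * X^(2 - m) = 0"
        using 2 pow_zero[of X 2] by (auto simp: mult.assoc)
    qed
    then show ?thesis using 2 by simp
  next
    case 3
    have "\<forall>m\<in>{0..3}. emb ((-1)^m * gbinom x 3 m) * X^m * Y * X^(3 - m) = 0"
    proof
      fix m :: nat assume "m \<in> {0..3}"
      then have "2 \<le> m \<or> 2 \<le> 3 - m" by auto
      then show "emb ((-1)^m * gbinom x 3 m) * X^m * Y * X^(3 - m) = 0"
        using 3 pow_zero[of X m] pow_zero[of X "3 - m"] by auto
    qed
    then show ?thesis using 3 by simp
  qed
qed

lemma gac:
  "1 \<le> a \<Longrightarrow> a \<le> n \<Longrightarrow> 1 \<le> b \<Longrightarrow> b \<le> n \<Longrightarrow> ac (psi a) (psi b)"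
  "1 \<le> a \<Longrightarrow> a \<le> n \<Longrightarrow> 1 \<le> b \<Longrightarrow> b \<le> n \<Longrightarrow> ac (psis a) (psis b)"
  "1 \<le> a \<Longrightarrow> a \<le> n \<Longrightarrow> 1 \<le> b \<Longrightarrow> b \<le> n \<Longrightarrow> a \<noteq> b \<Longrightarrow> ac (psi a) (psis b)"
  "1 \<le> a \<Longrightarrow> a \<le> n \<Longrightarrow> 1 \<le> b \<Longrightarrow> b \<le> n \<Longrightarrow> a \<noteq> b \<Longrightarrow> ac (psis a) (psi b)"
  using gen_ac by auto

lemma gsq:
  "1 \<le> a \<Longrightarrow> a \<le> n \<Longrightarrow> psi a * psi a = 0"
  "1 \<le> a \<Longrightarrow> a \<le> n \<Longrightarrow> psis a * psis a = 0"
  using psi_sq psis_sq by auto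

lemma gcm:
  "1 \<le> a \<Longrightarrow> a \<le> n \<Longrightarrow> 1 \<le> b \<Longrightarrow> b \<le> n \<Longrightarrow> cm (om a) (om b)"
  "1 \<le> a \<Longrightarrow> a \<le> n \<Longrightarrow> 1 \<le> b \<Longrightarrow> b \<le> n \<Longrightarrow> cm (omi a) (om b)"
  "1 \<le> a \<Longrightarrow> a \<le> n \<Longrightarrow> 1 \<le> b \<Longrightarrow> b \<le> n \<Longrightarrow> cm (om a) (omi b)"
  "1 \<le> a \<Longrightarrow> a \<le> n \<Longrightarrow> 1 \<le> b \<Longrightarrow> b \<le> n \<Longrightarrow> cm (omi a) (omi b)"
  using cm_oo by auto

lemma KKi_pair: assumes "a \<in> {1..n}" "b \<in> {1..n}"
  shows "om a * omi b * (omi a * om b) = 1" "omi a * om b * (om a * omi b) = 1"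
proof -
  have "om a * omi b * (omi a * om b) = om a * (omi b * omi a) * om b" by (simp add: mult.assoc)
  also have "\<dots> = (om a * omi a) * (omi b * om b)" using omi_omi_comm[OF assms(2,1)] by (simp add: mult.assoc)
  finally show "om a * omi b * (omi a * om b) = 1" using clD(2,3) assms by simp
  have "omi a * om b * (om a * omi b) = omi a * (om b * om a) * omi b" by (simp add: mult.assoc)
  also have "\<dots> = (omi a * om a) * (om b * omi b)" using clD(1)[OF assms(2,1)] by (simp add: mult.assoc)
  finally show "omi a * om b * (om a * omi b) = 1" using clD(2,3) assms by simp
qed

lemma KKi_plus: assumes "a \<in> {1..n}" "b \<in> {1..n}"
  shows "emb q * om a * om b * (emb (inverse q) * omi a * omi b) = 1"
        "emb (inverse q) * omi a * omi b * (emb q * om a * om b) = 1"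
proof -
  have "emb q * om a * om b * (emb (inverse q) * omi a * omi b)
     = (emb q * emb (inverse q)) * (om a * (om b * omi b) * omi a)"
    using omi_omi_comm[OF assms] by (simp add: mult.assoc emb_left[of "om b"] emb_left[of "om a"])
  then show "emb q * om a * om b * (emb (inverse q) * omi a * omi b) = 1"
    using clD(2,3) assms emb_inv[OF q_nz] by simp
  have "emb (inverse q) * omi a * omi b * (emb q * om a * om b)
     = (emb (inverse q) * emb q) * (omi a * (omi b * om b) * om a)"
    using clD(1)[OF assms] by (simp add: mult.assoc emb_left[of "omi b"] emb_left[of "omi a"])
  then show "emb (inverse q) * omi a * omi b * (emb q * om a * om b) = 1"
    using clD(2,3) assms emb_inv'[OF q_nz] by simp
qed

end

context clq begin

lemma hw_E: "1 \<le> j \<Longrightarrow> j < n \<Longrightarrow> hw (psi j * psis (Suc j)) (sl_root j)"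
  by (rule hw_cong[OF hw_mult[OF hw_psi hw_psis]]) (auto simp: sl_root_def)
lemma hw_F: "1 \<le> j \<Longrightarrow> j < n \<Longrightarrow> hw (psi (Suc j) * psis j) (\<lambda>t. - sl_root j t)"
  by (rule hw_cong[OF hw_mult[OF hw_psi hw_psis]]) (auto simp: sl_root_def)

lemma KX: "1 \<le> i \<Longrightarrow> i < n \<Longrightarrow> hw X v \<Longrightarrow>
   om i * omi (Suc i) * X * (omi i * om (Suc i)) = emb (power_int q (v i - v (Suc i))) * X"
  by (rule conjK) auto

lemma sl_KK: assumes "1 \<le> i" "i < n" "1 \<le> j" "j < n"
  shows "om i * omi (Suc i) * (om j * omi (Suc j)) = om j * omi (Suc j) * (om i * omi (Suc i))"
proof -
  have "cm (om i * omi (Suc i)) (om j * omi (Suc j))" using assms by (simp add: cmr gcm)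
  then show ?thesis unfolding cm_def .
qed

lemma sl_EF_off: assumes "1 \<le> i" "i < n" "1 \<le> j" "j < n" "i \<noteq> j"
  shows "psi i * psis (Suc i) * (psi (Suc j) * psis j) - psi (Suc j) * psis j * (psi i * psis (Suc i)) = 0"
proof -
  consider "j = Suc i" | "i = Suc j" | "Suc i < j \<or> Suc j < i" using assms(5) by linarith
  then show ?thesis
  proof cases
    case 1
    have "psi i * psis (Suc i) * (psi (Suc j) * psis j) = 0"
      unfolding 1 by (rule z24) (use assms 1 in \<open>simp_all add: gsq gac\<close>)
    moreover have "psi (Suc j) * psis j * (psi i * psis (Suc i)) = 0"
      unfolding 1 by (rule z24) (use assms 1 in \<open>simp_all add: gsq gac\<close>)
    ultimately show ?thesis by simp
  next
    case 2
    have "psi i * psis (Suc i) * (psi (Suc j) * psis j) = 0"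
      unfolding 2 by (rule z13) (use assms 2 in \<open>simp_all add: gsq gac\<close>)
    moreover have "psi (Suc j) * psis j * (psi i * psis (Suc i)) = 0"
      unfolding 2 by (rule z13) (use assms 2 in \<open>simp_all add: gsq gac\<close>)
    ultimately show ?thesis by simp
  next
    case 3
    have "cm (psi i * psis (Suc i)) (psi (Suc j) * psis j)"
      using assms 3 by (auto simp add: cmr gac)
    then show ?thesis unfolding cm_def by simp
  qed
qed

lemma sl_KEK: assumes "1 \<le> i" "i < n" "1 \<le> j" "j < n"
  shows "om i * omi (Suc i) * (psi j * psis (Suc j)) * (omi i * om (Suc i))
     = emb (power_int q (cartan n sl_root i j)) * (psi j * psis (Suc j))"
  using KX[OF assms(1,2) hw_E[OF assms(3,4)]] cartan_sl[OF assms(1,2)] by simp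

lemma sl_KFK: assumes "1 \<le> i" "i < n" "1 \<le> j" "j < n"
  shows "om i * omi (Suc i) * (psi (Suc j) * psis j) * (omi i * om (Suc i))
     = emb (power_int q (- cartan n sl_root i j)) * (psi (Suc j) * psis j)"
  using KX[OF assms(1,2) hw_F[OF assms(3,4)]] cartan_sl[OF assms(1,2)] by simp

lemma sl_EF: assumes "1 \<le> i" "i < n" "1 \<le> j" "j < n"
  shows "psi i * psis (Suc i) * (psi (Suc j) * psis j) - psi (Suc j) * psis j * (psi i * psis (Suc i))
    = (if i = j then emb (inverse (q ^ k - inverse (q ^ k))) * ((om i * omi (Suc i)) ^ k - (omi i * om (Suc i)) ^ k) else 0)"
proof (cases "i = j")
  case True
  then show ?thesis using diag_pair[of i "Suc i"] assms by simp
next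
  case False
  then show ?thesis using sl_EF_off assms by simp
qed

lemma sl_serreE: assumes "1 \<le> i" "i < n" "1 \<le> j" "j < n" "i \<noteq> j"
  shows "cartan n sl_root i j = 0 \<and> (psi i * psis (Suc i)) * (psi j * psis (Suc j)) = (psi j * psis (Suc j)) * (psi i * psis (Suc i))
    \<or> cartan n sl_root i j = -1 \<and> (psi i * psis (Suc i)) * (psi i * psis (Suc i)) = 0
       \<and> (psi i * psis (Suc i)) * (psi j * psis (Suc j)) * (psi i * psis (Suc i)) = 0
    \<or> cartan n sl_root i j = -2 \<and> (psi i * psis (Suc i)) * (psi i * psis (Suc i)) = 0"
proof -
  have sq: "(psi i * psis (Suc i)) * (psi i * psis (Suc i)) = 0"
    by (rule z13) (use assms in \<open>simp_all add: gsq gac\<close>)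
  consider "j = Suc i" | "i = Suc j" | "Suc i < j \<or> Suc j < i" using assms(5) by linarith
  then show ?thesis
  proof cases
    case 1
    have c: "cartan n sl_root i j = -1" using assms 1 by (simp add: cartan_sl sl_root_def evec_def)
    have "(psi i * psis (Suc i)) * (psi j * psis (Suc j)) * (psi i * psis (Suc i)) = 0"
      by (rule z_first) (use assms 1 in \<open>simp_all add: gsq gac cmr\<close>)
    then show ?thesis using c sq by simp
  next
    case 2
    have c: "cartan n sl_root i j = -1" using assms 2 by (simp add: cartan_sl sl_root_def evec_def)
    have "(psi i * psis (Suc i)) * (psi j * psis (Suc j)) * (psi i * psis (Suc i)) = 0"
      by (rule z_second) (use assms 2 in \<open>simp_all add: gsq gac cmr\<close>)
    then show ?thesis using c sq by simp
  next
    case 3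
    have c: "cartan n sl_root i j = 0" using assms 3 by (auto simp add: cartan_sl sl_root_def evec_def)
    have "cm (psi i * psis (Suc i)) (psi j * psis (Suc j))"
      using assms 3 by (auto simp add: cmr gac)
    then show ?thesis using c unfolding cm_def by simp
  qed
qed

lemma sl_serreF: assumes "1 \<le> i" "i < n" "1 \<le> j" "j < n" "i \<noteq> j"
  shows "cartan n sl_root i j = 0 \<and> (psi (Suc i) * psis i) * (psi (Suc j) * psis j) = (psi (Suc j) * psis j) * (psi (Suc i) * psis i)
    \<or> cartan n sl_root i j = -1 \<and> (psi (Suc i) * psis i) * (psi (Suc i) * psis i) = 0
       \<and> (psi (Suc i) * psis i) * (psi (Suc j) * psis j) * (psi (Suc i) * psis i) = 0
    \<or> cartan n sl_root i j = -2 \<and> (psi (Suc i) * psis i) * (psi (Suc i) * psis i) = 0"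
proof -
  have sq: "(psi (Suc i) * psis i) * (psi (Suc i) * psis i) = 0"
    by (rule z13) (use assms in \<open>simp_all add: gsq gac\<close>)
  consider "j = Suc i" | "i = Suc j" | "Suc i < j \<or> Suc j < i" using assms(5) by linarith
  then show ?thesis
  proof cases
    case 1
    have c: "cartan n sl_root i j = -1" using assms 1 by (simp add: cartan_sl sl_root_def evec_def)
    have "(psi (Suc i) * psis i) * (psi (Suc j) * psis j) * (psi (Suc i) * psis i) = 0"
      by (rule z_second) (use assms 1 in \<open>simp_all add: gsq gac cmr\<close>)
    then show ?thesis using c sq by simp
  next
    case 2
    have c: "cartan n sl_root i j = -1" using assms 2 by (simp add: cartan_sl sl_root_def evec_def)
    have "(psi (Suc i) * psis i) * (psi (Suc j) * psis j) * (psi (Suc i) * psis i) = 0"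
      by (rule z_first) (use assms 2 in \<open>simp_all add: gsq gac cmr\<close>)
    then show ?thesis using c sq by simp
  next
    case 3
    have c: "cartan n sl_root i j = 0" using assms 3 by (auto simp add: cartan_sl sl_root_def evec_def)
    have "cm (psi (Suc i) * psis i) (psi (Suc j) * psis j)"
      using assms 3 by (auto simp add: cmr gac)
    then show ?thesis using c unfolding cm_def by simp
  qed
qed

lemma sl_ok: "uq_rels emb q (n - 1) (cartan n sl_root) (\<lambda>_. 1) k
        (\<lambda>i. psi i * psis (i + 1)) (\<lambda>i. psi (i + 1) * psis i)
        (\<lambda>i. om i * omi (i + 1)) (\<lambda>i. omi i * om (i + 1))"
  unfolding uq_rels_def
proof (intro ballI conjI impI)
  fix i j assume i: "i \<in> {1..n-1}" and j: "j \<in> {1..n-1}"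
  have r: "1 \<le> i" "i < n" "1 \<le> j" "j < n" using i j by auto
  have ii: "i \<in> {1..n}" "Suc i \<in> {1..n}" using r by auto
  show "om i * omi (i + 1) * (om j * omi (j + 1)) = om j * omi (j + 1) * (om i * omi (i + 1))"
    using sl_KK[OF r] by simp
  show "om i * omi (i + 1) * (omi i * om (i + 1)) = 1" using KKi_pair[OF ii] by simp
  show "omi i * om (i + 1) * (om i * omi (i + 1)) = 1" using KKi_pair[OF ii] by simp
  show "om i * omi (i + 1) * (psi j * psis (j + 1)) * (omi i * om (i + 1)) =
        emb (power_int (q ^ 1) (cartan n sl_root i j)) * (psi j * psis (j + 1))"
    using sl_KEK[OF r] by simp
  show "om i * omi (i + 1) * (psi (j + 1) * psis j) * (omi i * om (i + 1)) =
        emb (power_int (q ^ 1) (- cartan n sl_root i j)) * (psi (j + 1) * psis j)"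
    using sl_KFK[OF r] by simp
  show "psi i * psis (i + 1) * (psi (j + 1) * psis j) - psi (j + 1) * psis j * (psi i * psis (i + 1)) =
        (if i = j then emb (inverse ((q ^ 1) ^ k - inverse ((q ^ 1) ^ k))) *
          ((om i * omi (i + 1)) ^ k - (omi i * om (i + 1)) ^ k) else 0)"
    using sl_EF[OF r] by simp
next
  fix i j assume i: "i \<in> {1..n-1}" and j: "j \<in> {1..n-1}" and ij: "i \<noteq> j"
  have r: "1 \<le> i" "i < n" "1 \<le> j" "j < n" using i j by auto
  show "(\<Sum>m = 0..nat (1 - cartan n sl_root i j).
          emb ((- 1) ^ m * gbinom ((q ^ 1) ^ k) (nat (1 - cartan n sl_root i j)) m) *
          (psi i * psis (i + 1)) ^ m * (psi j * psis (j + 1)) *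
          (psi i * psis (i + 1)) ^ (nat (1 - cartan n sl_root i j) - m)) = 0"
    using serre_ok[OF sl_serreE[OF r ij]] by simp
  show "(\<Sum>m = 0..nat (1 - cartan n sl_root i j).
          emb ((- 1) ^ m * gbinom ((q ^ 1) ^ k) (nat (1 - cartan n sl_root i j)) m) *
          (psi (i + 1) * psis i) ^ m * (psi (j + 1) * psis j) *
          (psi (i + 1) * psis i) ^ (nat (1 - cartan n sl_root i j) - m)) = 0"
    using serre_ok[OF sl_serreF[OF r ij]] by simp
qed

end

lemma cm_eq: "cm x y \<Longrightarrow> x * y = y * x" unfolding cm_def .

lemma z23: "b*c = 0 \<Longrightarrow> (a*b)*(c*d) = (0::'a::ring_1)"
  by (metis mult.assoc mult_zero_left mult_zero_right)
lemma z14: "a*a = 0 \<Longrightarrow> ac a (b*c) \<or> cm a (b*c) \<Longrightarrow> (a*b)*(c*a) = (0::'a::ring_1)"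
  using zero_mid[of a "b*c"] by (simp add: mult.assoc)
lemma z_aab: "a*a = 0 \<Longrightarrow> a*(a*b) = (0::'a::ring_1)"
  by (simp add: mult.assoc[symmetric])
lemma z_aba: "a*a = 0 \<Longrightarrow> ac a b \<Longrightarrow> a*b*a = (0::'a::ring_1)"
  using zero_mid by blast
lemma z_abb: "b*b = 0 \<Longrightarrow> a*b*b = (0::'a::ring_1)"
  by (simp add: mult.assoc)

context clq begin

lemma cartan_odd_sl: "1 \<le> i \<Longrightarrow> i < n \<Longrightarrow> j < n \<Longrightarrow> cartan n (so_odd_root n) i j = cartan n sl_root i j"
  by (simp add: cartan_odd_lt cartan_sl so_odd_root_def)

lemma odd_hwE: "1 \<le> j \<Longrightarrow> j \<le> n \<Longrightarrow> hw (if j = n then psi n else psi j * psis (Suc j)) (so_odd_root n j)"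
  by (cases "j = n") (auto simp: so_odd_root_def hw_psi hw_E)
lemma odd_hwF: "1 \<le> j \<Longrightarrow> j \<le> n \<Longrightarrow> hw (if j = n then psis n else psi (Suc j) * psis j) (\<lambda>t. - so_odd_root n j t)"
  by (cases "j = n") (auto simp: so_odd_root_def hw_psis hw_F)

lemma KnX_odd: assumes "hw X v" "s \<noteq> 0"
  shows "emb s * om n * X * (emb (inverse s) * omi n) = emb (power_int q (v n)) * X"
proof -
  have "emb s * om n * X * (emb (inverse s) * omi n) = (emb s * emb (inverse s)) * (om n * X * omi n)"
    by (simp add: mult.assoc emb_left[of X] emb_left[of "om n"])
  also have "\<dots> = om n * X * omi n" using emb_inv[OF assms(2)] by simp
  also have "\<dots> = emb (power_int q (v n)) * X" using conj1[OF assms(1)] n_pos by simp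
  finally show ?thesis .
qed

lemma KKi_odd: assumes "s \<noteq> 0"
  shows "emb s * om n * (emb (inverse s) * omi n) = 1" "emb (inverse s) * omi n * (emb s * om n) = 1"
proof -
  have nn: "n \<in> {1..n}" using n_pos by simp
  have "emb s * om n * (emb (inverse s) * omi n) = (emb s * emb (inverse s)) * (om n * omi n)"
    by (simp add: mult.assoc emb_left[of "om n"])
  then show "emb s * om n * (emb (inverse s) * omi n) = 1" using emb_inv[OF assms] clD(2)[OF nn nn] by simp
  have "emb (inverse s) * omi n * (emb s * om n) = (emb (inverse s) * emb s) * (omi n * om n)"
    by (simp add: mult.assoc emb_left[of "omi n"])
  then show "emb (inverse s) * omi n * (emb s * om n) = 1" using emb_inv'[OF assms] clD(3)[OF nn nn] by simp
qed

lemma odd_EF_nj: assumes "1 \<le> j" "j < n"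
  shows "psi n * (psi (Suc j) * psis j) - psi (Suc j) * psis j * psi n = 0"
proof (cases "Suc j = n")
  case True
  have "psi n * (psi (Suc j) * psis j) = 0" unfolding True by (rule z_aab) (use assms in \<open>simp add: gsq\<close>)
  moreover have "psi (Suc j) * psis j * psi n = 0" unfolding True by (rule z_aba) (use assms True in \<open>simp_all add: gsq gac\<close>)
  ultimately show ?thesis by simp
next
  case False
  have "cm (psi n) (psi (Suc j) * psis j)" using assms False by (simp add: cmr gac)
  then show ?thesis unfolding cm_def by simp
qed

lemma odd_EF_in: assumes "1 \<le> i" "i < n"
  shows "psi i * psis (Suc i) * psis n - psis n * (psi i * psis (Suc i)) = 0"
proof (cases "Suc i = n")
  case True
  have "psi i * psis (Suc i) * psis n = 0" unfolding True by (rule z_abb) (use assms in \<open>simp add: gsq\<close>)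
  moreover have "psis n * (psi i * psis (Suc i)) = 0"
  proof -
    have "psis n * psi i * psis n = 0" by (rule z_aba) (use assms True in \<open>simp_all add: gsq gac\<close>)
    then show ?thesis using True by (simp add: mult.assoc)
  qed
  ultimately show ?thesis by simp
next
  case False
  have "cm (psis n) (psi i * psis (Suc i))" using assms False by (simp add: cmr gac)
  then show ?thesis unfolding cm_def by simp
qed

lemma odd_serreE_in: assumes "1 \<le> i" "i < n"
  shows "cartan n (so_odd_root n) i n = 0 \<and> (psi i * psis (Suc i)) * psi n = psi n * (psi i * psis (Suc i))
    \<or> cartan n (so_odd_root n) i n = -1 \<and> (psi i * psis (Suc i)) * (psi i * psis (Suc i)) = 0
       \<and> (psi i * psis (Suc i)) * psi n * (psi i * psis (Suc i)) = 0
    \<or> cartan n (so_odd_root n) i n = -2 \<and> (psi i * psis (Suc i)) * (psi i * psis (Suc i)) = 0"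
proof -
  have sq: "(psi i * psis (Suc i)) * (psi i * psis (Suc i)) = 0"
    by (rule z13) (use assms in \<open>simp_all add: gsq gac\<close>)
  show ?thesis
  proof (cases "Suc i = n")
    case True
    have c: "cartan n (so_odd_root n) i n = -1" using assms True by (simp add: cartan_odd_lt so_odd_root_def evec_def)
    have "(psi i * psis (Suc i)) * psi n * (psi i * psis (Suc i)) = 0"
      by (rule z_first) (use assms True in \<open>simp_all add: gsq gac cmr\<close>)
    then show ?thesis using c sq by simp
  next
    case False
    have c: "cartan n (so_odd_root n) i n = 0" using assms False by (simp add: cartan_odd_lt so_odd_root_def evec_def)
    have "cm (psi i * psis (Suc i)) (psi n)" using assms False by (simp add: cmr gac)
    then show ?thesis using c unfolding cm_def by simp
  qed
qed

lemma odd_serreF_in: assumes "1 \<le> i" "i < n"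
  shows "cartan n (so_odd_root n) i n = 0 \<and> (psi (Suc i) * psis i) * psis n = psis n * (psi (Suc i) * psis i)
    \<or> cartan n (so_odd_root n) i n = -1 \<and> (psi (Suc i) * psis i) * (psi (Suc i) * psis i) = 0
       \<and> (psi (Suc i) * psis i) * psis n * (psi (Suc i) * psis i) = 0
    \<or> cartan n (so_odd_root n) i n = -2 \<and> (psi (Suc i) * psis i) * (psi (Suc i) * psis i) = 0"
proof -
  have sq: "(psi (Suc i) * psis i) * (psi (Suc i) * psis i) = 0"
    by (rule z13) (use assms in \<open>simp_all add: gsq gac\<close>)
  show ?thesis
  proof (cases "Suc i = n")
    case True
    have c: "cartan n (so_odd_root n) i n = -1" using assms True by (simp add: cartan_odd_lt so_odd_root_def evec_def)
    have "(psi (Suc i) * psis i) * psis n * (psi (Suc i) * psis i) = 0"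
      by (rule z_second) (use assms True in \<open>simp_all add: gsq gac cmr\<close>)
    then show ?thesis using c sq by simp
  next
    case False
    have c: "cartan n (so_odd_root n) i n = 0" using assms False by (simp add: cartan_odd_lt so_odd_root_def evec_def)
    have "cm (psi (Suc i) * psis i) (psis n)" using assms False by (simp add: cmr gac)
    then show ?thesis using c unfolding cm_def by simp
  qed
qed

lemma odd_serreE_nj: assumes "1 \<le> j" "j < n"
  shows "cartan n (so_odd_root n) n j = 0 \<and> psi n * (psi j * psis (Suc j)) = (psi j * psis (Suc j)) * psi n
    \<or> cartan n (so_odd_root n) n j = -1 \<and> psi n * psi n = 0 \<and> psi n * (psi j * psis (Suc j)) * psi n = 0
    \<or> cartan n (so_odd_root n) n j = -2 \<and> psi n * psi n = 0"
proof (cases "Suc j = n")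
  case True
  have c: "cartan n (so_odd_root n) n j = -2" using assms True by (simp add: cartan_odd_n so_odd_root_def sl_root_def evec_def)
  then show ?thesis using assms by (simp add: gsq)
next
  case False
  have c: "cartan n (so_odd_root n) n j = 0" using assms False by (simp add: cartan_odd_n so_odd_root_def sl_root_def evec_def)
  have "cm (psi n) (psi j * psis (Suc j))" using assms False by (simp add: cmr gac)
  then show ?thesis using c unfolding cm_def by simp
qed

lemma odd_serreF_nj: assumes "1 \<le> j" "j < n"
  shows "cartan n (so_odd_root n) n j = 0 \<and> psis n * (psi (Suc j) * psis j) = (psi (Suc j) * psis j) * psis n
    \<or> cartan n (so_odd_root n) n j = -1 \<and> psis n * psis n = 0 \<and> psis n * (psi (Suc j) * psis j) * psis n = 0
    \<or> cartan n (so_odd_root n) n j = -2 \<and> psis n * psis n = 0"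
proof (cases "Suc j = n")
  case True
  have c: "cartan n (so_odd_root n) n j = -2" using assms True by (simp add: cartan_odd_n so_odd_root_def sl_root_def evec_def)
  then show ?thesis using assms by (simp add: gsq)
next
  case False
  have c: "cartan n (so_odd_root n) n j = 0" using assms False by (simp add: cartan_odd_n so_odd_root_def sl_root_def evec_def)
  have "cm (psis n) (psi (Suc j) * psis j)" using assms False by (simp add: cmr gac)
  then show ?thesis using c unfolding cm_def by simp
qed

end

lemma four_cases:
  fixes i j n :: nat
  assumes "i \<in> {1..n}" "j \<in> {1..n}"
    and "1 \<le> i \<Longrightarrow> i < n \<Longrightarrow> i \<noteq> n \<Longrightarrow> 1 \<le> j \<Longrightarrow> j < n \<Longrightarrow> j \<noteq> n \<Longrightarrow> P"
    and "1 \<le> i \<Longrightarrow> i < n \<Longrightarrow> i \<noteq> n \<Longrightarrow> j = n \<Longrightarrow> P"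
    and "i = n \<Longrightarrow> 1 \<le> j \<Longrightarrow> j < n \<Longrightarrow> j \<noteq> n \<Longrightarrow> P"
    and "i = n \<Longrightarrow> j = n \<Longrightarrow> P"
  shows P
proof -
  have r: "1 \<le> i" "i \<le> n" "1 \<le> j" "j \<le> n" using assms(1,2) by auto
  show P
  proof (cases "i = n")
    case True
    then show ?thesis
    proof (cases "j = n")
      case False
      then have "j < n" using le_neq_implies_less[OF r(4)] by blast
      then show ?thesis using assms(5) True False r by blast
    qed (use assms(6) in blast)
  next
    case False
    then have i: "i < n" using le_neq_implies_less[OF r(2)] by blast
    show ?thesis
    proof (cases "j = n")
      case False
      then have "j < n" using le_neq_implies_less[OF r(4)] by blast
      then show ?thesis using assms(3) i False r \<open>i \<noteq> n\<close> by blast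
    qed (use assms(4) i r \<open>i \<noteq> n\<close> in blast)
  qed
qed

lemma pis: "power_int (s::'k::field) (2 * x) = power_int (s^2) x"
  by (simp add: power_int_mult)
lemma pis2: "power_int (s::'k::field) (- (2 * x)) = power_int (s^2) (- x)"
  using pis[of s "-x"] by simp

context clq begin

lemma odd_ok: assumes s: "s ^ 2 = q" shows "uq_rels emb s n (cartan n (so_odd_root n)) (\<lambda>i. if i < n then 2 else 1) k
        (\<lambda>i. if i = n then psi n else psi i * psis (i + 1))
        (\<lambda>i. if i = n then psis n else psi (i + 1) * psis i)
        (\<lambda>i. if i = n then emb s * om n else om i * omi (i + 1))
        (\<lambda>i. if i = n then emb (inverse s) * omi n else omi i * om (i + 1))"
proof -
  have s0: "s \<noteq> 0" using s q_nz by auto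
  show ?thesis
  unfolding uq_rels_def
  apply (intro ballI conjI impI)
  subgoal for i j
    apply (rule cm_eq)
    apply (rule four_cases[where i=i and j=j and n=n], assumption+)
       apply (simp_all add: cmr gcm cm_emb)
    done
  subgoal for i j
    apply (rule four_cases[where i=i and j=j and n=n], assumption+)
       apply (simp_all add: KKi_pair KKi_odd[OF s0])
    done
  subgoal for i j
    apply (rule four_cases[where i=i and j=j and n=n], assumption+)
       apply (simp_all add: KKi_pair KKi_odd[OF s0])
    done
  subgoal for i j
    apply (rule four_cases[where i=i and j=j and n=n], assumption+)
    subgoal using KX[OF _ _ odd_hwE[of j], of i] by (simp add: s cartan_odd_lt)
    subgoal using KX[OF _ _ odd_hwE[of j], of i] by (simp add: s cartan_odd_lt)
    subgoal using KnX_odd[OF odd_hwE[of j] s0] by (simp add: cartan_odd_n pis s)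
    subgoal using KnX_odd[OF odd_hwE[of j] s0] by (simp add: cartan_odd_n pis s)
    done
  subgoal for i j
    apply (rule four_cases[where i=i and j=j and n=n], assumption+)
    subgoal using KX[OF _ _ odd_hwF[of j], of i] by (simp add: s cartan_odd_lt)
    subgoal using KX[OF _ _ odd_hwF[of j], of i] by (simp add: s cartan_odd_lt)
    subgoal using KnX_odd[OF odd_hwF[of j] s0] by (simp add: cartan_odd_n pis2 s)
    subgoal using KnX_odd[OF odd_hwF[of j] s0] by (simp add: cartan_odd_n pis2 s)
    done
  subgoal for i j
    apply (rule four_cases[where i=i and j=j and n=n], assumption+)
    subgoal using sl_EF[of i j] by (simp add: s)
    subgoal using odd_EF_in[of i] by simp
    subgoal using odd_EF_nj[of j] by simp
    subgoal using diag_odd[OF _ s, of n] n_pos by simp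
    done
  subgoal for i j
    apply (rule four_cases[where i=i and j=j and n=n], assumption+)
    subgoal using serre_ok[OF sl_serreE[of i j]] by (simp add: s cartan_odd_sl)
    subgoal using serre_ok[OF odd_serreE_in[of i]] by (simp add: s)
    subgoal using serre_ok[OF odd_serreE_nj[of j]] by simp
    subgoal by simp
    done
  subgoal for i j
    apply (rule four_cases[where i=i and j=j and n=n], assumption+)
    subgoal using serre_ok[OF sl_serreF[of i j]] by (simp add: s cartan_odd_sl)
    subgoal using serre_ok[OF odd_serreF_in[of i]] by (simp add: s)
    subgoal using serre_ok[OF odd_serreF_nj[of j]] by simp
    subgoal by simp
    done
  done
qed

end

context clq begin

lemma cartan_even_sl: "1 \<le> i \<Longrightarrow> i < n \<Longrightarrow> j < n \<Longrightarrow> cartan n (so_even_root n) i j = cartan n sl_root i j"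
  by (simp add: cartan_even_lt cartan_sl so_even_root_def)

lemma even_hwE: assumes "2 \<le> n" "1 \<le> j" "j \<le> n"
  shows "hw (if j = n then psi (n - 1) * psi n else psi j * psis (Suc j)) (so_even_root n j)"
proof (cases "j = n")
  case True
  have "hw (psi (n - 1) * psi n) (\<lambda>t. evec (n - 1) t + evec n t)"
    by (rule hw_mult[OF hw_psi hw_psi]) (use assms in auto)
  then show ?thesis using True by (simp add: so_even_root_def)
next
  case False
  then show ?thesis using assms hw_E[of j] by (simp add: so_even_root_def)
qed

lemma even_hwF: assumes "2 \<le> n" "1 \<le> j" "j \<le> n"
  shows "hw (if j = n then psis n * psis (n - 1) else psi (Suc j) * psis j) (\<lambda>t. - so_even_root n j t)"
proof (cases "j = n")
  case True
  have h: "hw (psis n * psis (n - 1)) (\<lambda>t. - evec n t + - evec (n - 1) t)"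
    by (rule hw_mult[OF hw_psis hw_psis]) (use assms in auto)
  have "hw (psis n * psis (n - 1)) (\<lambda>t. - so_even_root n n t)"
    by (rule hw_cong[OF h]) (simp add: so_even_root_def)
  then show ?thesis using True by simp
next
  case False
  then show ?thesis using assms hw_F[of j] by (simp add: so_even_root_def)
qed

lemma KnX_even: assumes "2 \<le> n" "hw X v"
  shows "emb q * om (n - 1) * om n * X * (emb (inverse q) * omi (n - 1) * omi n) = emb (power_int q (v (n - 1) + v n)) * X"
proof -
  have "emb q * om (n - 1) * om n * X * (emb (inverse q) * omi (n - 1) * omi n)
      = (emb q * emb (inverse q)) * (om (n - 1) * om n * X * (omi (n - 1) * omi n))"
    by (simp add: mult.assoc emb_left[of X] emb_left[of "om n"] emb_left[of "om (n - 1)"] emb_left[of "om (n - Suc 0)"])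
  also have "\<dots> = om (n - 1) * om n * X * (omi (n - 1) * omi n)" using emb_inv[OF q_nz] by simp
  also have "\<dots> = emb (power_int q (v (n - 1) + v n)) * X" by (rule conjKp) (use assms in auto)
  finally show ?thesis .
qed

lemma even_EF_in: assumes n2: "2 \<le> n" and i: "1 \<le> i" "i < n"
  shows "psi i * psis (Suc i) * (psis n * psis (n - 1)) - psis n * psis (n - 1) * (psi i * psis (Suc i)) = 0"
proof -
  consider "i = n - 1" | "Suc i = n - 1" | "Suc i < n - 1" using i by linarith
  then show ?thesis
  proof cases
    case 1
    then have e: "n - 1 = i" "Suc i = n" using n2 by auto
    have "psi i * psis n * (psis n * psis i) = 0" by (rule z23) (use n2 i in \<open>simp add: gsq\<close>)
    moreover have "psis n * psis i * (psi i * psis n) = 0" by (rule z14) (use n2 i e in \<open>simp_all add: gsq gac cmr\<close>)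
    ultimately show ?thesis unfolding e by simp
  next
    case 2
    then have e: "n - 1 = Suc i" using n2 by auto
    have "psi i * psis (Suc i) * (psis n * psis (Suc i)) = 0" by (rule z24) (use n2 i e in \<open>simp_all add: gsq gac\<close>)
    moreover have "psis n * psis (Suc i) * (psi i * psis (Suc i)) = 0" by (rule z24) (use n2 i e in \<open>simp_all add: gsq gac\<close>)
    ultimately show ?thesis unfolding e by simp
  next
    case 3
    have "cm (psi i * psis (Suc i)) (psis n * psis (n - 1))" using n2 i 3 by (simp add: cmr gac)
    then show ?thesis unfolding cm_def by simp
  qed
qed

lemma even_EF_nj: assumes n2: "2 \<le> n" and j: "1 \<le> j" "j < n"
  shows "psi (n - 1) * psi n * (psi (Suc j) * psis j) - psi (Suc j) * psis j * (psi (n - 1) * psi n) = 0"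
proof -
  consider "j = n - 1" | "Suc j = n - 1" | "Suc j < n - 1" using j by linarith
  then show ?thesis
  proof cases
    case 1
    then have e: "n - 1 = j" "Suc j = n" using n2 by auto
    have "psi j * psi n * (psi n * psis j) = 0" by (rule z23) (use n2 j in \<open>simp add: gsq\<close>)
    moreover have "psi n * psis j * (psi j * psi n) = 0" by (rule z14) (use n2 j e in \<open>simp_all add: gsq gac cmr\<close>)
    ultimately show ?thesis unfolding e by simp
  next
    case 2
    then have e: "n - 1 = Suc j" using n2 by auto
    have "psi (Suc j) * psi n * (psi (Suc j) * psis j) = 0" by (rule z13) (use n2 j e in \<open>simp_all add: gsq gac\<close>)
    moreover have "psi (Suc j) * psis j * (psi (Suc j) * psi n) = 0" by (rule z13) (use n2 j e in \<open>simp_all add: gsq gac\<close>)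
    ultimately show ?thesis unfolding e by simp
  next
    case 3
    have "cm (psi (n - 1) * psi n) (psi (Suc j) * psis j)" using n2 j 3 by (simp add: cmr gac)
    then show ?thesis unfolding cm_def by simp
  qed
qed

lemma even_serreE_in: assumes n2: "2 \<le> n" and i: "1 \<le> i" "i < n"
  shows "cartan n (so_even_root n) i n = 0 \<and> (psi i * psis (Suc i)) * (psi (n - 1) * psi n) = (psi (n - 1) * psi n) * (psi i * psis (Suc i))
    \<or> cartan n (so_even_root n) i n = -1 \<and> (psi i * psis (Suc i)) * (psi i * psis (Suc i)) = 0
       \<and> (psi i * psis (Suc i)) * (psi (n - 1) * psi n) * (psi i * psis (Suc i)) = 0
    \<or> cartan n (so_even_root n) i n = -2 \<and> (psi i * psis (Suc i)) * (psi i * psis (Suc i)) = 0"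
proof -
  have sq: "(psi i * psis (Suc i)) * (psi i * psis (Suc i)) = 0"
    by (rule z13) (use i in \<open>simp_all add: gsq gac\<close>)
  consider "i = n - 1" | "Suc i = n - 1" | "Suc i < n - 1" using i by linarith
  then show ?thesis
  proof cases
    case 1
    then have e: "n - 1 = i" "Suc i = n" using n2 by auto
    have c: "cartan n (so_even_root n) i n = 0" using n2 i e by (simp add: cartan_even_lt so_even_root_def evec_def)
    have "psi i * psis n * (psi i * psi n) = 0" by (rule z13) (use n2 i in \<open>simp_all add: gsq gac\<close>)
    moreover have "psi i * psi n * (psi i * psis n) = 0" by (rule z13) (use n2 i in \<open>simp_all add: gsq gac\<close>)
    ultimately show ?thesis using c unfolding e by simp
  next
    case 2
    then have e: "n - 1 = Suc i" using n2 by auto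
    have c: "cartan n (so_even_root n) i n = -1" using n2 i e by (simp add: cartan_even_lt so_even_root_def evec_def)
    have "(psi i * psis (Suc i)) * (psi (Suc i) * psi n) * (psi i * psis (Suc i)) = 0"
      by (rule z_first) (use n2 i e in \<open>simp_all add: gsq gac cmr\<close>)
    then show ?thesis using c sq unfolding e by simp
  next
    case 3
    have c: "cartan n (so_even_root n) i n = 0" using n2 i 3 by (simp add: cartan_even_lt so_even_root_def evec_def)
    have "cm (psi i * psis (Suc i)) (psi (n - 1) * psi n)" using n2 i 3 by (simp add: cmr gac)
    then show ?thesis using c unfolding cm_def by simp
  qed
qed

lemma even_serreF_in: assumes n2: "2 \<le> n" and i: "1 \<le> i" "i < n"
  shows "cartan n (so_even_root n) i n = 0 \<and> (psi (Suc i) * psis i) * (psis n * psis (n - 1)) = (psis n * psis (n - 1)) * (psi (Suc i) * psis i)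
    \<or> cartan n (so_even_root n) i n = -1 \<and> (psi (Suc i) * psis i) * (psi (Suc i) * psis i) = 0
       \<and> (psi (Suc i) * psis i) * (psis n * psis (n - 1)) * (psi (Suc i) * psis i) = 0
    \<or> cartan n (so_even_root n) i n = -2 \<and> (psi (Suc i) * psis i) * (psi (Suc i) * psis i) = 0"
proof -
  have sq: "(psi (Suc i) * psis i) * (psi (Suc i) * psis i) = 0"
    by (rule z13) (use i in \<open>simp_all add: gsq gac\<close>)
  consider "i = n - 1" | "Suc i = n - 1" | "Suc i < n - 1" using i by linarith
  then show ?thesis
  proof cases
    case 1
    then have e: "n - 1 = i" "Suc i = n" using n2 by auto
    have c: "cartan n (so_even_root n) i n = 0" using n2 i e by (simp add: cartan_even_lt so_even_root_def evec_def)
    have "psi n * psis i * (psis n * psis i) = 0" by (rule z24) (use n2 i in \<open>simp_all add: gsq gac\<close>)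
    moreover have "psis n * psis i * (psi n * psis i) = 0" by (rule z24) (use n2 i in \<open>simp_all add: gsq gac\<close>)
    ultimately show ?thesis using c unfolding e by simp
  next
    case 2
    then have e: "n - 1 = Suc i" using n2 by auto
    have c: "cartan n (so_even_root n) i n = -1" using n2 i e by (simp add: cartan_even_lt so_even_root_def evec_def)
    have "(psi (Suc i) * psis i) * (psis n * psis (Suc i)) * (psi (Suc i) * psis i) = 0"
      by (rule z_second) (use n2 i e in \<open>simp_all add: gsq gac cmr\<close>)
    then show ?thesis using c sq unfolding e by simp
  next
    case 3
    have c: "cartan n (so_even_root n) i n = 0" using n2 i 3 by (simp add: cartan_even_lt so_even_root_def evec_def)
    have "cm (psi (Suc i) * psis i) (psis n * psis (n - 1))" using n2 i 3 by (simp add: cmr gac)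
    then show ?thesis using c unfolding cm_def by simp
  qed
qed

lemma even_serreE_nj: assumes n2: "2 \<le> n" and j: "1 \<le> j" "j < n"
  shows "cartan n (so_even_root n) n j = 0 \<and> (psi (n - 1) * psi n) * (psi j * psis (Suc j)) = (psi j * psis (Suc j)) * (psi (n - 1) * psi n)
    \<or> cartan n (so_even_root n) n j = -1 \<and> (psi (n - 1) * psi n) * (psi (n - 1) * psi n) = 0
       \<and> (psi (n - 1) * psi n) * (psi j * psis (Suc j)) * (psi (n - 1) * psi n) = 0
    \<or> cartan n (so_even_root n) n j = -2 \<and> (psi (n - 1) * psi n) * (psi (n - 1) * psi n) = 0"
proof -
  have sq: "(psi (n - 1) * psi n) * (psi (n - 1) * psi n) = 0"
    by (rule z13) (use n2 in \<open>simp_all add: gsq gac\<close>)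
  consider "j = n - 1" | "Suc j = n - 1" | "Suc j < n - 1" using j by linarith
  then show ?thesis
  proof cases
    case 1
    then have e: "n - 1 = j" "Suc j = n" using n2 by auto
    have c: "cartan n (so_even_root n) n j = 0" using n2 j e by (simp add: cartan_even_n so_even_root_def sl_root_def evec_def)
    have "psi j * psi n * (psi j * psis n) = 0" by (rule z13) (use n2 j in \<open>simp_all add: gsq gac\<close>)
    moreover have "psi j * psis n * (psi j * psi n) = 0" by (rule z13) (use n2 j in \<open>simp_all add: gsq gac\<close>)
    ultimately show ?thesis using c unfolding e by simp
  next
    case 2
    then have e: "n - 1 = Suc j" using n2 by auto
    have c: "cartan n (so_even_root n) n j = -1" using n2 j e by (simp add: cartan_even_n so_even_root_def sl_root_def evec_def)
    have "(psi (Suc j) * psi n) * (psi j * psis (Suc j)) * (psi (Suc j) * psi n) = 0"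
      by (rule z_second) (use n2 j e in \<open>simp_all add: gsq gac cmr\<close>)
    then show ?thesis using c sq unfolding e by simp
  next
    case 3
    have c: "cartan n (so_even_root n) n j = 0" using n2 j 3 by (simp add: cartan_even_n so_even_root_def sl_root_def evec_def)
    have "cm (psi (n - 1) * psi n) (psi j * psis (Suc j))" using n2 j 3 by (simp add: cmr gac)
    then show ?thesis using c unfolding cm_def by simp
  qed
qed

lemma even_serreF_nj: assumes n2: "2 \<le> n" and j: "1 \<le> j" "j < n"
  shows "cartan n (so_even_root n) n j = 0 \<and> (psis n * psis (n - 1)) * (psi (Suc j) * psis j) = (psi (Suc j) * psis j) * (psis n * psis (n - 1))
    \<or> cartan n (so_even_root n) n j = -1 \<and> (psis n * psis (n - 1)) * (psis n * psis (n - 1)) = 0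
       \<and> (psis n * psis (n - 1)) * (psi (Suc j) * psis j) * (psis n * psis (n - 1)) = 0
    \<or> cartan n (so_even_root n) n j = -2 \<and> (psis n * psis (n - 1)) * (psis n * psis (n - 1)) = 0"
proof -
  have sq: "(psis n * psis (n - 1)) * (psis n * psis (n - 1)) = 0"
    by (rule z13) (use n2 in \<open>simp_all add: gsq gac\<close>)
  consider "j = n - 1" | "Suc j = n - 1" | "Suc j < n - 1" using j by linarith
  then show ?thesis
  proof cases
    case 1
    then have e: "n - 1 = j" "Suc j = n" using n2 by auto
    have c: "cartan n (so_even_root n) n j = 0" using n2 j e by (simp add: cartan_even_n so_even_root_def sl_root_def evec_def)
    have "psis n * psis j * (psi n * psis j) = 0" by (rule z24) (use n2 j in \<open>simp_all add: gsq gac\<close>)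
    moreover have "psi n * psis j * (psis n * psis j) = 0" by (rule z24) (use n2 j in \<open>simp_all add: gsq gac\<close>)
    ultimately show ?thesis using c unfolding e by simp
  next
    case 2
    then have e: "n - 1 = Suc j" using n2 by auto
    have c: "cartan n (so_even_root n) n j = -1" using n2 j e by (simp add: cartan_even_n so_even_root_def sl_root_def evec_def)
    have "(psis n * psis (Suc j)) * (psi (Suc j) * psis j) * (psis n * psis (Suc j)) = 0"
      by (rule z_first) (use n2 j e in \<open>simp_all add: gsq gac cmr\<close>)
    then show ?thesis using c sq unfolding e by simp
  next
    case 3
    have c: "cartan n (so_even_root n) n j = 0" using n2 j 3 by (simp add: cartan_even_n so_even_root_def sl_root_def evec_def)
    have "cm (psis n * psis (n - 1)) (psi (Suc j) * psis j)" using n2 j 3 by (simp add: cmr gac)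
    then show ?thesis using c unfolding cm_def by simp
  qed
qed

end

lemma cm_refl: "cm x x" unfolding cm_def ..
context clq begin

lemma even_ok: assumes n2: "2 \<le> n" shows "uq_rels emb q n (cartan n (so_even_root n)) (\<lambda>_. 1) k
        (\<lambda>i. if i = n then psi (n - 1) * psi n else psi i * psis (i + 1))
        (\<lambda>i. if i = n then psis n * psis (n - 1) else psi (i + 1) * psis i)
        (\<lambda>i. if i = n then emb q * om (n - 1) * om n else om i * omi (i + 1))
        (\<lambda>i. if i = n then emb (inverse q) * omi (n - 1) * omi n else omi i * om (i + 1))"
proof -
  have nn: "n - 1 \<in> {1..n}" "n \<in> {1..n}" "n - 1 \<noteq> n" using n2 by auto
  show ?thesis
  unfolding uq_rels_def
  apply (intro ballI conjI impI)
  subgoal for i j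
    apply (rule cm_eq)
    apply (rule four_cases[where i=i and j=j and n=n], assumption+)
       apply (simp_all add: cmr gcm cm_emb n2 cm_refl)
    done
  subgoal for i j
    apply (insert KKi_plus[OF nn(1,2)])
    apply (rule four_cases[where i=i and j=j and n=n], assumption+)
       apply (simp_all add: KKi_pair)
    done
  subgoal for i j
    apply (insert KKi_plus[OF nn(1,2)])
    apply (rule four_cases[where i=i and j=j and n=n], assumption+)
       apply (simp_all add: KKi_pair)
    done
  subgoal for i j
    apply (rule four_cases[where i=i and j=j and n=n], assumption+)
    subgoal using KX[OF _ _ even_hwE[OF n2, of j], of i] by (simp add: cartan_even_lt)
    subgoal using KX[OF _ _ even_hwE[OF n2, of j], of i] by (simp add: cartan_even_lt)
    subgoal using KnX_even[OF n2 even_hwE[OF n2, of j]] by (simp add: cartan_even_n n2)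
    subgoal using KnX_even[OF n2 even_hwE[OF n2, of j]] by (simp add: cartan_even_n n2)
    done
  subgoal for i j
    apply (rule four_cases[where i=i and j=j and n=n], assumption+)
    subgoal using KX[OF _ _ even_hwF[OF n2, of j], of i] by (simp add: cartan_even_lt)
    subgoal using KX[OF _ _ even_hwF[OF n2, of j], of i] by (simp add: cartan_even_lt)
    subgoal using KnX_even[OF n2 even_hwF[OF n2, of j]] by (simp add: cartan_even_n n2 add.commute)
    subgoal using KnX_even[OF n2 even_hwF[OF n2, of j]] by (simp add: cartan_even_n n2 add.commute)
    done
  subgoal for i j
    apply (rule four_cases[where i=i and j=j and n=n], assumption+)
    subgoal using sl_EF[of i j] by simp
    subgoal using even_EF_in[OF n2, of i] by simp
    subgoal using even_EF_nj[OF n2, of j] by simp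
    subgoal using diag_even[OF nn] by simp
    done
  subgoal for i j
    apply (rule four_cases[where i=i and j=j and n=n], assumption+)
    subgoal using serre_ok[OF sl_serreE[of i j]] by (simp add: cartan_even_sl)
    subgoal using serre_ok[OF even_serreE_in[OF n2, of i]] by simp
    subgoal using serre_ok[OF even_serreE_nj[OF n2, of j]] by simp
    subgoal by simp
    done
  subgoal for i j
    apply (rule four_cases[where i=i and j=j and n=n], assumption+)
    subgoal using serre_ok[OF sl_serreF[of i j]] by (simp add: cartan_even_sl)
    subgoal using serre_ok[OF even_serreF_in[OF n2, of i]] by simp
    subgoal using serre_ok[OF even_serreF_nj[OF n2, of j]] by simp
    subgoal by simp
    done
  done
qed

end

theorem proposition3p17:
  fixes emb :: "'k::field \<Rightarrow> 'a::ring_1"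
    and q :: 'k and n k :: nat
    and psi psis om omi :: "nat \<Rightarrow> 'a"
  assumes char: "(2::'k) \<noteq> 0"
    and q_nz: "q \<noteq> 0"
    and n_pos: "0 < n" and k_pos: "0 < k"
    and q2k: "q ^ (2 * k) \<noteq> 1"
    and alg: "is_kalg emb"
    and cl: "cl_rels emb q n k psi psis om omi"
  shows
    "uq_rels emb q (n - 1) (cartan n sl_root) (\<lambda>_. 1) k
        (\<lambda>i. psi i * psis (i + 1)) (\<lambda>i. psi (i + 1) * psis i)
        (\<lambda>i. om i * omi (i + 1)) (\<lambda>i. omi i * om (i + 1))
     \<and> (2 \<le> n \<longrightarrow>
        uq_rels emb q n (cartan n (so_even_root n)) (\<lambda>_. 1) k
        (\<lambda>i. if i = n then psi (n - 1) * psi n else psi i * psis (i + 1))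
        (\<lambda>i. if i = n then psis n * psis (n - 1) else psi (i + 1) * psis i)
        (\<lambda>i. if i = n then emb q * om (n - 1) * om n else om i * omi (i + 1))
        (\<lambda>i. if i = n then emb (inverse q) * omi (n - 1) * omi n else omi i * om (i + 1)))
     \<and> (\<forall>s::'k. s ^ 2 = q \<longrightarrow>
        uq_rels emb s n (cartan n (so_odd_root n)) (\<lambda>i. if i < n then 2 else 1) k
        (\<lambda>i. if i = n then psi n else psi i * psis (i + 1))
        (\<lambda>i. if i = n then psis n else psi (i + 1) * psis i)
        (\<lambda>i. if i = n then emb s * om n else om i * omi (i + 1))
        (\<lambda>i. if i = n then emb (inverse s) * omi n else omi i * om (i + 1)))"
proof -
  interpret clq emb q n k psi psis om omi
    using assms by (unfold_locales) auto
  show ?thesis using sl_ok even_ok odd_ok by blast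
qed

end
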